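(* Let $B$ be a finite set with $|B|\ge 2$ and let $f$ be an $\mathsf{E}$-shop on $B$, with $b\in B$ such that $b\in f(x)$ for all $x\in B$. Then $\langle f\rangle$ contains an $\mathsf{E}$-shop $g$ for which there is a partition of $B$ into sets $B',B''$ with $B'$ non-empty such that (1) $g(x)\supseteq\{x,b\}$ for all $x\in B'$; (2) $g(x)\supseteq\{b\}$ for all $x\in B''$; (3) for every $y\in B$ there exists $x\in B'$ with $y\in g(x)$.
   Context: A shop on $B$ is a map $f:B\to\mathcal{P}(B)\setminus\{\emptyset\}$ such that every $y\in B$ lies in $f(x)$ for some $x\in B$. An $\mathsf{E}$-shop is a shop $f$ for which some $b\in B$ satisfies $b\in f(x)$ for all $x\in B$. The identity shop is $x\mapsto\{x\}$; composition is $(g\circ f)(x)=\{z:\exists y\ (y\in f(x)\wedge z\in g(y))\}$; $f$ is a sub-shop of $g$ if $f(x)\subseteq g(x)$ for all $x$. A down-she-monoid (DSM) on $B$ is a set of shops on $B$ containing the identity, closed under composition and under taking sub-shops (that are shops). $\langle f\rangle$ denotes the smallest DSM containing $f$. *)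

theory Defs
  imports Main
begin

text \<open>Shops on a carrier B are represented as functions 'a => 'a set that are
  extensional: they take the value {} outside B.\<close>

definition shop :: "'a set \<Rightarrow> ('a \<Rightarrow> 'a set) \<Rightarrow> bool" where
  "shop B f \<longleftrightarrow> (\<forall>x\<in>B. f x \<subseteq> B \<and> f x \<noteq> {}) \<and> (\<forall>x. x \<notin> B \<longrightarrow> f x = {})
      \<and> (\<forall>y\<in>B. \<exists>x\<in>B. y \<in> f x)"

definition E_shop :: "'a set \<Rightarrow> ('a \<Rightarrow> 'a set) \<Rightarrow> bool" where
  "E_shop B f \<longleftrightarrow> shop B f \<and> (\<exists>b\<in>B. \<forall>x\<in>B. b \<in> f x)"

definition id_shop :: "'a set \<Rightarrow> 'a \<Rightarrow> 'a set" where
  "id_shop B = (\<lambda>x. if x \<in> B then {x} else {})"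

definition shop_comp :: "('a \<Rightarrow> 'a set) \<Rightarrow> ('a \<Rightarrow> 'a set) \<Rightarrow> 'a \<Rightarrow> 'a set" where
  "shop_comp g f = (\<lambda>x. {z. \<exists>y. y \<in> f x \<and> z \<in> g y})"

definition sub_shop :: "('a \<Rightarrow> 'a set) \<Rightarrow> ('a \<Rightarrow> 'a set) \<Rightarrow> bool" where
  "sub_shop f g \<longleftrightarrow> (\<forall>x. f x \<subseteq> g x)"

definition DSM :: "'a set \<Rightarrow> ('a \<Rightarrow> 'a set) set \<Rightarrow> bool" where
  "DSM B M \<longleftrightarrow> (\<forall>f\<in>M. shop B f) \<and> id_shop B \<in> M
     \<and> (\<forall>f\<in>M. \<forall>g\<in>M. shop_comp g f \<in> M)
     \<and> (\<forall>g\<in>M. \<forall>f. shop B f \<and> sub_shop f g \<longrightarrow> f \<in> M)"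

definition generated_DSM :: "'a set \<Rightarrow> ('a \<Rightarrow> 'a set) \<Rightarrow> ('a \<Rightarrow> 'a set) set" where
  "generated_DSM B f = \<Inter>{M. DSM B M \<and> f \<in> M}"

end

theory Submission
  imports Defs
begin

primrec fpow :: "'a set \<Rightarrow> ('a \<Rightarrow> 'a set) \<Rightarrow> nat \<Rightarrow> 'a \<Rightarrow> 'a set" where
  "fpow B f 0 = id_shop B"
| "fpow B f (Suc k) = shop_comp f (fpow B f k)"

lemma comp_shop:
  assumes f: "shop B f" and g: "shop B g" shows "shop B (shop_comp g f)"
proof -
  have f1: "\<forall>x\<in>B. f x \<subseteq> B \<and> f x \<noteq> {}" and f2: "\<forall>x. x \<notin> B \<longrightarrow> f x = {}"
    and f3: "\<forall>y\<in>B. \<exists>x\<in>B. y \<in> f x" using f unfolding shop_def by auto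
  have g1: "\<forall>x\<in>B. g x \<subseteq> B \<and> g x \<noteq> {}" and g3: "\<forall>y\<in>B. \<exists>x\<in>B. y \<in> g x"
    using g unfolding shop_def by auto
  have A: "shop_comp g f x \<subseteq> B \<and> shop_comp g f x \<noteq> {}" if x: "x \<in> B" for x
  proof
    show "shop_comp g f x \<subseteq> B" using f1 g1 x unfolding shop_comp_def by blast
    obtain y where y: "y \<in> f x" using f1 x by blast
    hence "y \<in> B" using f1 x by blast
    then obtain z where "z \<in> g y" using g1 by blast
    thus "shop_comp g f x \<noteq> {}" using y unfolding shop_comp_def by blast
  qed
  have Bn: "shop_comp g f x = {}" if "x \<notin> B" for x
    using f2 that unfolding shop_comp_def by simp
  have C: "\<exists>x\<in>B. z \<in> shop_comp g f x" if z: "z \<in> B" for z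
  proof -
    obtain y where y: "y \<in> B" "z \<in> g y" using g3 z by blast
    obtain x where x: "x \<in> B" "y \<in> f x" using f3 y by blast
    show ?thesis using x y unfolding shop_comp_def by blast
  qed
  show ?thesis unfolding shop_def using A Bn C by blast
qed

lemma id_shop_shop: "shop B (id_shop B)"
  unfolding shop_def id_shop_def by auto

lemma fpow_shop: "shop B f \<Longrightarrow> shop B (fpow B f k)"
proof (induction k)
  case 0 show ?case by (simp add: id_shop_shop)
next
  case (Suc k) then show ?case by (simp add: comp_shop)
qed

lemma fpow_gen: "fpow B f k \<in> generated_DSM B f"
  unfolding generated_DSM_def
proof (rule InterI)
  fix M assume "M \<in> {M. DSM B M \<and> f \<in> M}"
  hence D: "DSM B M" and fM: "f \<in> M" by auto
  show "fpow B f k \<in> M"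
  proof (induction k)
    case 0 show ?case using D unfolding DSM_def by simp
  next
    case (Suc k)
    have "\<forall>f\<in>M. \<forall>g\<in>M. shop_comp g f \<in> M" using D unfolding DSM_def by blast
    then show ?case using Suc fM by simp
  qed
qed

lemma fpow_b: "\<forall>x\<in>B. b \<in> f x \<Longrightarrow> b \<in> B \<Longrightarrow> x \<in> B \<Longrightarrow> k \<ge> 1 \<Longrightarrow> b \<in> fpow B f k x"
proof (induction k)
  case 0 then show ?case by simp
next
  case (Suc k)
  show ?case
  proof (cases k)
    case 0 then show ?thesis using Suc.prems by (simp add: shop_comp_def id_shop_def)
  next
    case (Suc k') then have "b \<in> fpow B f k x" using Suc.IH Suc.prems by auto
    then show ?thesis using Suc.prems unfolding fpow.simps shop_comp_def by blast
  qed
qed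

lemma fpow_p: "\<forall>y\<in>B. p y \<in> B \<and> y \<in> f (p y) \<Longrightarrow> y \<in> B \<Longrightarrow> y \<in> fpow B f k ((p^^k) y)"
proof (induction k arbitrary: y)
  case 0 then show ?case by (simp add: id_shop_def)
next
  case (Suc k)
  have "p y \<in> fpow B f k ((p^^k) (p y))" using Suc by auto
  moreover have "y \<in> f (p y)" using Suc by auto
  moreover have "(p^^Suc k) y = (p^^k) (p y)" by (simp add: funpow_Suc_right del: funpow.simps)
  ultimately show ?case unfolding fpow.simps shop_comp_def by (metis mem_Collect_eq)
qed

lemma funpow_in: "\<forall>y\<in>B. p y \<in> B \<Longrightarrow> y \<in> B \<Longrightarrow> (p^^k) y \<in> B"
  by (induction k) auto

lemma period:
  assumes fin: "finite B" and pB: "\<forall>y\<in>B. p y \<in> B" and yB: "y \<in> B"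
  shows "(p^^(fact (card B) + fact (card B))) y = (p^^(fact (card B))) y"
proof -
  let ?n = "card B"
  have "(\<lambda>i. (p^^i) y) ` {0..?n} \<subseteq> B" using funpow_in[OF pB yB] by auto
  hence "card ((\<lambda>i. (p^^i) y) ` {0..?n}) \<le> ?n" using fin by (simp add: card_mono)
  hence "\<not> inj_on (\<lambda>i. (p^^i) y) {0..?n}"
    using card_image by fastforce
  then obtain i j where ij: "i < j" "j \<le> ?n" "(p^^i) y = (p^^j) y"
    unfolding inj_on_def by (metis atLeastAtMost_iff linorder_neqE_nat)
  define k where "k = j - i"
  have k: "k > 0" "k \<le> ?n" using ij k_def by auto
  have c: "(p^^(i + c*k)) y = (p^^i) y" for c
  proof (induction c)
    case 0 then show ?case by simp
  next
    case (Suc c)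
    have e: "i + Suc c * k = c*k + j" using ij k_def by simp
    have "(p^^(i + Suc c * k)) y = (p^^(c*k)) ((p^^j) y)"
      unfolding e funpow_add by simp
    also have "\<dots> = (p^^(c*k)) ((p^^i) y)" using ij by simp
    also have "\<dots> = (p^^(i + c*k)) y" by (simp only: add.commute[of i "c*k"] funpow_add o_apply)
    finally show ?case using Suc by simp
  qed
  obtain c where m: "fact ?n = c * k"
    using dvd_fact[of k ?n] k by (auto simp: dvd_def mult.commute)
  have "?n \<le> fact ?n" by (rule fact_ge_self)
  hence ile: "i \<le> fact ?n" using ij by linarith
  have e1: "fact ?n + fact ?n = (fact ?n - i) + (i + c*k)" using ile m by simp
  have e2: "fact ?n = (fact ?n - i) + i" using ile by simp
  have "(p^^(fact ?n + fact ?n)) y = (p^^(fact ?n - i)) ((p^^(i + c*k)) y)"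
    by (subst e1) (simp only: funpow_add o_apply)
  also have "\<dots> = (p^^(fact ?n - i)) ((p^^i) y)" using c by simp
  also have "\<dots> = (p^^(fact ?n)) y" by (subst (2) e2) (simp only: funpow_add o_apply)
  finally show ?thesis .
qed

theorem lemma3p6:
  fixes B :: "'a set" and f :: "'a \<Rightarrow> 'a set" and b :: 'a
  assumes "finite B" and "card B \<ge> 2"
    and "E_shop B f" and "b \<in> B" and "\<forall>x\<in>B. b \<in> f x"
  shows "\<exists>g \<in> generated_DSM B f. E_shop B g \<and>
           (\<exists>B' B''. B' \<union> B'' = B \<and> B' \<inter> B'' = {} \<and> B' \<noteq> {} \<and>
              (\<forall>x\<in>B'. {x, b} \<subseteq> g x) \<and>
              (\<forall>x\<in>B''. {b} \<subseteq> g x) \<and>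
              (\<forall>y\<in>B. \<exists>x\<in>B'. y \<in> g x))"
proof -
  have sf: "shop B f" using assms(3) by (simp add: E_shop_def)
  hence "\<forall>y\<in>B. \<exists>x\<in>B. y \<in> f x" by (simp add: shop_def)
  then obtain p where p: "\<forall>y\<in>B. p y \<in> B \<and> y \<in> f (p y)" by metis
  define m :: nat where "m = fact (card B)"
  have m1: "m \<ge> 1" by (simp add: m_def)
  define g where "g = fpow B f m"
  have bg: "\<forall>x\<in>B. b \<in> g x" unfolding g_def using fpow_b[OF assms(5) assms(4) _ m1] by blast
  have Eg: "E_shop B g" unfolding E_shop_def
  proof
    show "shop B g" unfolding g_def by (rule fpow_shop[OF sf])
    show "\<exists>b\<in>B. \<forall>x\<in>B. b \<in> g x" using bg assms(4) by blast
  qed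
  define B' where "B' = {x\<in>B. x \<in> g x}"
  have cov: "\<forall>y\<in>B. \<exists>x\<in>B'. y \<in> g x"
  proof
    fix y assume yB: "y \<in> B"
    have pB: "\<forall>y\<in>B. p y \<in> B" using p by auto
    define x where "x = (p^^m) y"
    have xB: "x \<in> B" using funpow_in[OF pB yB] x_def by auto
    have "x \<in> g ((p^^m) x)" using fpow_p[OF p xB] g_def by auto
    moreover have "(p^^m) x = x"
      using period[OF assms(1) pB yB] x_def m_def by (simp add: funpow_add)
    ultimately have "x \<in> B'" using xB B'_def by auto
    moreover have "y \<in> g x" using fpow_p[OF p yB] g_def x_def by auto
    ultimately show "\<exists>x\<in>B'. y \<in> g x" by blast
  qed
  have "B \<noteq> {}" using assms(4) by auto
  hence "B' \<noteq> {}" using cov assms(4) by blast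
  moreover have "B' \<union> (B - B') = B" "B' \<inter> (B - B') = {}" using B'_def by auto
  moreover have "\<forall>x\<in>B'. {x, b} \<subseteq> g x" using B'_def bg by auto
  moreover have "\<forall>x\<in>B - B'. {b} \<subseteq> g x" using bg by auto
  ultimately have "E_shop B g \<and>
           (B' \<union> (B - B') = B \<and> B' \<inter> (B - B') = {} \<and> B' \<noteq> {} \<and>
              (\<forall>x\<in>B'. {x, b} \<subseteq> g x) \<and>
              (\<forall>x\<in>B - B'. {b} \<subseteq> g x) \<and>
              (\<forall>y\<in>B. \<exists>x\<in>B'. y \<in> g x))" using Eg cov by simp
  hence "E_shop B g \<and>
           (\<exists>B' B''. B' \<union> B'' = B \<and> B' \<inter> B'' = {} \<and> B' \<noteq> {} \<and>
              (\<forall>x\<in>B'. {x, b} \<subseteq> g x) \<and>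
              (\<forall>x\<in>B''. {b} \<subseteq> g x) \<and>
              (\<forall>y\<in>B. \<exists>x\<in>B'. y \<in> g x))" by (intro conjI exI[of _ B'] exI[of _ "B - B'"]) simp_all
  moreover have "g \<in> generated_DSM B f" unfolding g_def by (rule fpow_gen)
  ultimately show ?thesis by (rule bexI[where x=g])
qed

end
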